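(* For every NBA $\mathcal A$, the relation $P(\subseteq^{\mathrm{bw\text{-}di}},\sqsubset^{\mathrm{di}})$ is good for pruning, i.e. $\mathcal L(\mathrm{Prune}(\mathcal A,P(\subseteq^{\mathrm{bw\text{-}di}},\sqsubset^{\mathrm{di}})))=\mathcal L(\mathcal A)$.
   Context: An NBA is $\mathcal A=(\Sigma,Q,I,F,\delta)$, $\delta\subseteq Q\times\Sigma\times Q$, assumed forward and backward complete; initial traces start in $I$, fair traces are infinite and visit $F$ infinitely often; the language is the set of infinite words with an initial fair trace. Direct simulation $\sqsubseteq^{\mathrm{di}}$: in the game from $(p_0,q_0)$, at round $i$ from $(p_i,q_i)$ Spoiler picks $p_i\xrightarrow{\sigma_i}p_{i+1}$ and Duplicator answers $q_i\xrightarrow{\sigma_i}q_{i+1}$; Duplicator wins the infinite play if $p_i\in F\Rightarrow q_i\in F$ for all $i$; $p\sqsubseteq^{\mathrm{di}}q$ iff Duplicator has a winning strategy from $(p,q)$; $\sqsubset^{\mathrm{di}}$ is its strict part. Backward direct trace inclusion: $p\subseteq^{\mathrm{bw\text{-}di}}q$ iff for every finite word $\sigma_0\cdots\sigma_{m-1}$ and every initial finite trace $p_0\xrightarrow{\sigma_0}\cdots\xrightarrow{\sigma_{m-1}}p_m=p$ there is an initial finite trace $q_0\xrightarrow{\sigma_0}\cdots\xrightarrow{\sigma_{m-1}}q_m=q$ with $p_i\in F\Rightarrow q_i\in F$ for $0\le i\le m$. $\mathrm{Prune}(\mathcal A,P)$ has transition set $\{t\in\delta:\nexists t'\in\delta,(t,t')\in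 P\}$; $P(R_b,R_f)=\{((p,\sigma,r),(p',\sigma,r'))\in\delta\times\delta:p\,R_b\,p',\ r\,R_f\,r'\}$. *)

theory Defs
  imports Main
begin

record ('s, 'q) nba =
  alph  :: "'s set"
  states :: "'q set"
  init  :: "'q set"
  acc   :: "'q set"
  trans :: "('q \<times> 's \<times> 'q) set"

definition well_formed_nba :: "('s, 'q) nba \<Rightarrow> bool" where
  "well_formed_nba A \<longleftrightarrow> finite (alph A) \<and> finite (states A) \<and>
     init A \<subseteq> states A \<and> acc A \<subseteq> states A \<and>
     trans A \<subseteq> states A \<times> alph A \<times> states A"

definition forward_complete :: "('s, 'q) nba \<Rightarrow> bool" where
  "forward_complete A \<longleftrightarrow>
     (\<forall>q\<in>states A. \<forall>a\<in>alph A. \<exists>q'. (q, a, q') \<in> trans A)"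

definition backward_complete :: "('s, 'q) nba \<Rightarrow> bool" where
  "backward_complete A \<longleftrightarrow>
     (\<forall>q\<in>states A. \<forall>a\<in>alph A. \<exists>q'. (q', a, q) \<in> trans A)"

definition lang :: "('s, 'q) nba \<Rightarrow> (nat \<Rightarrow> 's) set" where
  "lang A = {w. \<exists>\<rho>. \<rho> 0 \<in> init A \<and> (\<forall>i. (\<rho> i, w i, \<rho> (Suc i)) \<in> trans A)
                    \<and> (\<exists>\<^sub>\<infinity>i. \<rho> i \<in> acc A)}"

text \<open>A Duplicator strategy maps the history of Spoiler's moves
  (states p_0..p_i and letters sigma_0..sigma_(i-1)) to Duplicator's state q_i (i >= 1).\<close>
definition di_sim :: "('s, 'q) nba \<Rightarrow> 'q \<Rightarrow> 'q \<Rightarrow> bool" where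
  "di_sim A p0 q0 \<longleftrightarrow>
    (\<exists>str :: 'q list \<Rightarrow> 's list \<Rightarrow> 'q.
      \<forall>ps \<sigma>s. (ps 0 = p0 \<and> (\<forall>i. (ps i, \<sigma>s i, ps (Suc i)) \<in> trans A)) \<longrightarrow>
        (let qs = (\<lambda>i. if i = 0 then q0 else str (map ps [0..<Suc i]) (map \<sigma>s [0..<i]))
         in \<forall>i. (qs i, \<sigma>s i, qs (Suc i)) \<in> trans A \<and> (ps i \<in> acc A \<longrightarrow> qs i \<in> acc A)))"

definition strict_di_sim :: "('s, 'q) nba \<Rightarrow> 'q \<Rightarrow> 'q \<Rightarrow> bool" where
  "strict_di_sim A p q \<longleftrightarrow> di_sim A p q \<and> \<not> di_sim A q p"

definition bw_di_incl :: "('s, 'q) nba \<Rightarrow> 'q \<Rightarrow> 'q \<Rightarrow> bool" where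
  "bw_di_incl A p q \<longleftrightarrow>
    (\<forall>(m::nat) (w :: nat \<Rightarrow> 's) (ps :: nat \<Rightarrow> 'q).
       (ps 0 \<in> init A \<and> (\<forall>i<m. (ps i, w i, ps (Suc i)) \<in> trans A) \<and> ps m = p) \<longrightarrow>
       (\<exists>qs :: nat \<Rightarrow> 'q. qs 0 \<in> init A \<and> (\<forall>i<m. (qs i, w i, qs (Suc i)) \<in> trans A) \<and> qs m = q
           \<and> (\<forall>i\<le>m. ps i \<in> acc A \<longrightarrow> qs i \<in> acc A)))"

definition prune :: "('s, 'q) nba \<Rightarrow> (('q \<times> 's \<times> 'q) \<times> ('q \<times> 's \<times> 'q)) set \<Rightarrow> ('s, 'q) nba" where
  "prune A P = A\<lparr> trans := {t \<in> trans A. \<not> (\<exists>t'\<in>trans A. (t, t') \<in> P)} \<rparr>"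

definition prune_rel :: "('s, 'q) nba \<Rightarrow> ('q \<Rightarrow> 'q \<Rightarrow> bool) \<Rightarrow> ('q \<Rightarrow> 'q \<Rightarrow> bool)
    \<Rightarrow> (('q \<times> 's \<times> 'q) \<times> ('q \<times> 's \<times> 'q)) set" where
  "prune_rel A Rb Rf = {((p, a, r), (p', a', r')). (p, a, r) \<in> trans A \<and> (p', a', r') \<in> trans A
       \<and> a' = a \<and> Rb p p' \<and> Rf r r'}"

end

theory Submission
  imports Defs
begin

definition resp :: "('q list \<Rightarrow> 's list \<Rightarrow> 'q) \<Rightarrow> 'q \<Rightarrow> (nat \<Rightarrow> 'q) \<Rightarrow> (nat \<Rightarrow> 's) \<Rightarrow> nat \<Rightarrow> 'q" where
  "resp str q0 ps \<sigma>s i = (if i = 0 then q0 else str (map ps [0..<Suc i]) (map \<sigma>s [0..<i]))"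

abbreviation path :: "('s, 'q) nba \<Rightarrow> (nat \<Rightarrow> 'q) \<Rightarrow> (nat \<Rightarrow> 's) \<Rightarrow> bool" where
  "path A ps \<sigma>s \<equiv> (\<forall>i. (ps i, \<sigma>s i, ps (Suc i)) \<in> trans A)"

lemma di_sim_alt: "di_sim A p0 q0 \<longleftrightarrow> (\<exists>str. \<forall>ps \<sigma>s. ps 0 = p0 \<and> path A ps \<sigma>s \<longrightarrow>
   (\<forall>i. (resp str q0 ps \<sigma>s i, \<sigma>s i, resp str q0 ps \<sigma>s (Suc i)) \<in> trans A
        \<and> (ps i \<in> acc A \<longrightarrow> resp str q0 ps \<sigma>s i \<in> acc A)))"
  unfolding di_sim_def resp_def Let_def by simp

lemma di_refl: "di_sim A p p"
  unfolding di_sim_alt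
  apply (rule exI[of _ "\<lambda>ps \<sigma>s. last ps"])
  apply (auto simp: resp_def)
  done

lemma di_acc: assumes "di_sim A p q" "ps 0 = p" "path A ps \<sigma>s" "p \<in> acc A" shows "q \<in> acc A"
proof -
  obtain str where str: "\<And>ps \<sigma>s. ps 0 = p \<Longrightarrow> path A ps \<sigma>s \<Longrightarrow> (\<forall>i. (resp str q ps \<sigma>s i, \<sigma>s i, resp str q ps \<sigma>s (Suc i)) \<in> trans A
        \<and> (ps i \<in> acc A \<longrightarrow> resp str q ps \<sigma>s i \<in> acc A))"
    using assms(1) unfolding di_sim_alt by blast
  from str[OF assms(2,3)] assms(2,4) show ?thesis by (auto simp: resp_def)
qed

definition shift :: "'a \<Rightarrow> (nat \<Rightarrow> 'a) \<Rightarrow> nat \<Rightarrow> 'a" where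
  "shift x f i = (case i of 0 \<Rightarrow> x | Suc j \<Rightarrow> f j)"

lemma shift_simps[simp]: "shift x f 0 = x" "shift x f (Suc j) = f j"
  by (simp_all add: shift_def)

lemma map_shift: "map (shift x f) [0..<Suc n] = x # map f [0..<n]"
  by (simp add: map_upt_Suc del: upt_Suc)

lemma di_step: assumes "di_sim A p q" "(p,a,p') \<in> trans A" "ps' 0 = p'" "path A ps' \<sigma>s'"
  shows "\<exists>q'. (q,a,q') \<in> trans A \<and> di_sim A p' q'"
proof -
  obtain str where str: "\<And>ps \<sigma>s. ps 0 = p \<Longrightarrow> path A ps \<sigma>s \<Longrightarrow> (\<forall>i. (resp str q ps \<sigma>s i, \<sigma>s i, resp str q ps \<sigma>s (Suc i)) \<in> trans A
        \<and> (ps i \<in> acc A \<longrightarrow> resp str q ps \<sigma>s i \<in> acc A))"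
    using assms(1) unfolding di_sim_alt by blast
  have ext: "path A (shift p ps) (shift a \<sigma>s)" if "ps 0 = p'" "path A ps \<sigma>s" for ps \<sigma>s
  proof
    fix i show "(shift p ps i, shift a \<sigma>s i, shift p ps (Suc i)) \<in> trans A"
      using that assms(2) by (cases i) auto
  qed
  have "(q, a, str [p, p'] [a]) \<in> trans A"
    using spec[OF str[OF _ ext[OF assms(3,4)]], of 0] assms(3) by (simp add: resp_def)
  moreover have "di_sim A p' (str [p, p'] [a])"
    unfolding di_sim_alt
  proof (intro exI[of _ "\<lambda>ps \<sigma>s. str (p # ps) (a # \<sigma>s)"] allI impI)
    fix ps \<sigma>s i assume h: "ps 0 = p' \<and> path A ps \<sigma>s"
    have eq: "resp (\<lambda>ps \<sigma>s. str (p # ps) (a # \<sigma>s)) (str [p, p'] [a]) ps \<sigma>s i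
       = resp str q (shift p ps) (shift a \<sigma>s) (Suc i)" for i
      using h by (cases i) (simp add: resp_def, simp add: resp_def map_shift del: upt_Suc)
    have "shift p ps 0 = p" by simp
    from spec[OF str[OF this ext[of ps \<sigma>s]], of "Suc i"] h
    have X: "(resp str q (shift p ps) (shift a \<sigma>s) (Suc i), \<sigma>s i,
          resp str q (shift p ps) (shift a \<sigma>s) (Suc (Suc i))) \<in> trans A \<and>
         (ps i \<in> acc A \<longrightarrow> resp str q (shift p ps) (shift a \<sigma>s) (Suc i) \<in> acc A)" by simp
    then show "(resp (\<lambda>ps \<sigma>s. str (p # ps) (a # \<sigma>s)) (str [p, p'] [a]) ps \<sigma>s i, \<sigma>s i,
              resp (\<lambda>ps \<sigma>s. str (p # ps) (a # \<sigma>s)) (str [p, p'] [a]) ps \<sigma>s (Suc i)) \<in> trans A \<and>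
          (ps i \<in> acc A \<longrightarrow> resp (\<lambda>ps \<sigma>s. str (p # ps) (a # \<sigma>s)) (str [p, p'] [a]) ps \<sigma>s i \<in> acc A)"
      unfolding eq by blast
  qed
  ultimately show ?thesis by blast
qed

lemma resp_trunc: "j \<le> i \<Longrightarrow> resp s q (nth (map PS [0..<Suc i])) (nth (map \<Sigma>S [0..<i])) j = resp s q PS \<Sigma>S j"
proof -
  assume ji: "j \<le> i"
  have M1: "map (nth (map PS [0..<Suc i])) [0..<Suc j] = map PS [0..<Suc j]"
    using ji by (intro map_cong) (auto simp del: upt_Suc)
  have M2: "map (nth (map \<Sigma>S [0..<i])) [0..<j] = map \<Sigma>S [0..<j]"
    using ji by (intro map_cong) (auto simp del: upt_Suc)
  show ?thesis unfolding resp_def by (simp only: M1 M2)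
qed

lemma di_trans: assumes "di_sim A p q" "di_sim A q r" shows "di_sim A p r"
proof -
  obtain str1 where str1: "\<And>ps \<sigma>s. ps 0 = p \<Longrightarrow> path A ps \<sigma>s \<Longrightarrow> (\<forall>i. (resp str1 q ps \<sigma>s i, \<sigma>s i, resp str1 q ps \<sigma>s (Suc i)) \<in> trans A
        \<and> (ps i \<in> acc A \<longrightarrow> resp str1 q ps \<sigma>s i \<in> acc A))"
    using assms(1) unfolding di_sim_alt by blast
  obtain str2 where str2: "\<And>ps \<sigma>s. ps 0 = q \<Longrightarrow> path A ps \<sigma>s \<Longrightarrow> (\<forall>i. (resp str2 r ps \<sigma>s i, \<sigma>s i, resp str2 r ps \<sigma>s (Suc i)) \<in> trans A
        \<and> (ps i \<in> acc A \<longrightarrow> resp str2 r ps \<sigma>s i \<in> acc A))"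
    using assms(2) unfolding di_sim_alt by blast
  define str where "str ps \<sigma>s = str2 (map (resp str1 q (nth ps) (nth \<sigma>s)) [0..<length ps]) \<sigma>s" for ps \<sigma>s
  show ?thesis unfolding di_sim_alt
  proof (intro exI[of _ str] allI impI)
    fix PS \<Sigma>S i assume h: "PS 0 = p \<and> path A PS \<Sigma>S"
    define QS where "QS = resp str1 q PS \<Sigma>S"
    have eq: "resp str r PS \<Sigma>S j = resp str2 r QS \<Sigma>S j" for j
    proof (cases j)
      case 0 then show ?thesis by (simp add: resp_def)
    next
      case (Suc k)
      have M: "map (resp str1 q (nth (map PS [0..<Suc j])) (nth (map \<Sigma>S [0..<j]))) [0..<Suc j] = map QS [0..<Suc j]"
        unfolding QS_def by (rule map_cong) (auto simp: resp_trunc simp del: upt_Suc)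
      have "j \<noteq> 0" using Suc by simp
      then show ?thesis by (simp add: resp_def str_def M del: upt_Suc)
    qed
    have q1: "QS 0 = q" "path A QS \<Sigma>S" "\<forall>i. PS i \<in> acc A \<longrightarrow> QS i \<in> acc A"
      using str1[of PS \<Sigma>S] h unfolding QS_def by (auto simp: resp_def)
    from spec[OF str2[OF q1(1,2)], of i] q1(3)
    show "(resp str r PS \<Sigma>S i, \<Sigma>S i, resp str r PS \<Sigma>S (Suc i)) \<in> trans A \<and>
          (PS i \<in> acc A \<longrightarrow> resp str r PS \<Sigma>S i \<in> acc A)"
      unfolding eq by blast
  qed
qed

lemma inf_path:
  assumes wf: "well_formed_nba A" and fc: "forward_complete A" and q: "q \<in> states A" and a: "a \<in> alph A"
  shows "\<exists>ps \<sigma>s. ps 0 = q \<and> path A ps \<sigma>s"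
proof -
  define nxt where "nxt x = (SOME y. (x, a, y) \<in> trans A)" for x
  have step: "x \<in> states A \<Longrightarrow> (x, a, nxt x) \<in> trans A" for x
    using fc a unfolding forward_complete_def nxt_def by (metis someI_ex)
  have st: "(x, a, y) \<in> trans A \<Longrightarrow> y \<in> states A" for x y
    using wf unfolding well_formed_nba_def by auto
  define ps where "ps i = (nxt ^^ i) q" for i
  have "ps i \<in> states A \<and> (ps i, a, ps (Suc i)) \<in> trans A" for i
  proof (induction i)
    case 0 then show ?case using q step by (simp add: ps_def)
  next
    case (Suc i) then show ?case using step st by (simp add: ps_def) blast
  qed
  then show ?thesis by (intro exI[of _ ps] exI[of _ "\<lambda>_. a"]) (simp add: ps_def)
qed

lemma trans_states: "well_formed_nba A \<Longrightarrow> (x, a, y) \<in> trans A \<Longrightarrow> x \<in> states A \<and> a \<in> alph A \<and> y \<in> states A"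
  unfolding well_formed_nba_def by auto

lemma prune_trans: "(x, a, y) \<in> trans (prune A (prune_rel A Rb Rf)) \<longleftrightarrow>
   (x, a, y) \<in> trans A \<and> \<not> (\<exists>p' r'. (p', a, r') \<in> trans A \<and> Rb x p' \<and> Rf y r')"
  unfolding prune_def prune_rel_def by auto

lemma prune_simps[simp]: "init (prune A P) = init A" "acc (prune A P) = acc A"
  by (simp_all add: prune_def)

lemma konig:
  fixes G :: "nat \<Rightarrow> (nat \<Rightarrow> 'a) \<Rightarrow> bool"
  assumes fin: "finite S"
    and ex: "\<And>n. \<exists>\<sigma>. G n \<sigma>"
    and inS: "\<And>n \<sigma> i. G n \<sigma> \<Longrightarrow> i \<le> n \<Longrightarrow> \<sigma> i \<in> S"
    and mono: "\<And>n m \<sigma>. G n \<sigma> \<Longrightarrow> m \<le> n \<Longrightarrow> G m \<sigma>"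
    and loc: "\<And>n \<sigma> \<sigma>'. G n \<sigma> \<Longrightarrow> (\<forall>j\<le>n. \<sigma>' j = \<sigma> j) \<Longrightarrow> G n \<sigma>'"
  shows "\<exists>\<sigma>. \<forall>n. G n \<sigma>"
proof -
  define ok where "ok k \<sigma> \<longleftrightarrow> (\<forall>n\<ge>k. \<exists>\<sigma>'. G n \<sigma>' \<and> (\<forall>j<k. \<sigma>' j = \<sigma> j))" for k \<sigma>
  have step: "\<exists>s. ok (Suc k) (\<sigma>(k := s))" if okk: "ok k \<sigma>" for k \<sigma>
  proof (rule ccontr)
    assume "\<nexists>s. ok (Suc k) (\<sigma>(k := s))"
    then have "\<forall>s. \<exists>n\<ge>Suc k. \<not> (\<exists>\<sigma>'. G n \<sigma>' \<and> (\<forall>j<Suc k. \<sigma>' j = (\<sigma>(k := s)) j))"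
      unfolding ok_def by blast
    then obtain N where N: "\<And>s. N s \<ge> Suc k \<and> \<not> (\<exists>\<sigma>'. G (N s) \<sigma>' \<and> (\<forall>j<Suc k. \<sigma>' j = (\<sigma>(k := s)) j))"
      by metis
    define M where "M = max (Suc k) (Max (N ` S))"
    obtain \<sigma>' where \<sigma>': "G M \<sigma>'" "\<forall>j<k. \<sigma>' j = \<sigma> j" 
    proof -
      have "M \<ge> k" unfolding M_def by simp
      then show ?thesis using okk that unfolding ok_def by blast
    qed
    have sS: "\<sigma>' k \<in> S" using inS[OF \<sigma>'(1)] unfolding M_def by simp
    have "N (\<sigma>' k) \<le> M" using fin sS unfolding M_def by (simp add: le_max_iff_disj)
    then have "G (N (\<sigma>' k)) \<sigma>'" using mono \<sigma>'(1) by blast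
    moreover have "\<forall>j<Suc k. \<sigma>' j = (\<sigma>(k := \<sigma>' k)) j" using \<sigma>'(2) by (simp add: less_Suc_eq)
    ultimately show False using N[of "\<sigma>' k"] by blast
  qed
  define seq where "seq = rec_nat (\<lambda>_. undefined) (\<lambda>k \<sigma>. \<sigma>(k := SOME s. ok (Suc k) (\<sigma>(k := s))))"
  have seq_simps: "seq 0 = (\<lambda>_. undefined)" "seq (Suc k) = (seq k)(k := SOME s. ok (Suc k) ((seq k)(k := s)))" for k
    by (simp_all add: seq_def)
  have okseq: "ok k (seq k)" for k
  proof (induction k)
    case 0 then show ?case using ex unfolding ok_def by simp
  next
    case (Suc k)
    have "\<exists>s. ok (Suc k) ((seq k)(k:=s))" by (rule step[OF Suc.IH])
    from someI_ex[OF this] show ?case by (simp only: seq_simps)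
  qed
  have stable: "seq m j = seq (Suc j) j" if "j < m" for m j
    using that
  proof (induction m)
    case 0 then show ?case by simp
  next
    case (Suc m)
    show ?case
    proof (cases "j = m")
      case True then show ?thesis by simp
    next
      case False
      then have "j < m" using Suc.prems by simp
      then have "seq m j = seq (Suc j) j" by (rule Suc.IH)
      moreover have "seq (Suc m) j = seq m j" using False unfolding seq_simps(2)[of m] by (rule fun_upd_other)
      ultimately show ?thesis by simp
    qed
  qed
  define \<sigma> where "\<sigma> i = seq (Suc i) i" for i
  have "G n \<sigma>" for n
  proof -
    obtain \<sigma>' where "G (Suc n) \<sigma>'" "\<forall>j<Suc n. \<sigma>' j = seq (Suc n) j" using okseq[of "Suc n"] unfolding ok_def by blast
    then have "G n \<sigma>'" "\<forall>j\<le>n. \<sigma> j = \<sigma>' j"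
      using mono[of "Suc n" \<sigma>' n] stable[of _ "Suc n"] unfolding \<sigma>_def by (auto simp: less_Suc_eq_le)
    then show ?thesis using loc by blast
  qed
  then show ?thesis by blast
qed

lemma key:
  fixes A :: "('s,'q) nba" and w :: "nat \<Rightarrow> 's"
  assumes wf: "well_formed_nba A" and fc: "forward_complete A"
  shows "\<rho> 0 \<in> init A \<Longrightarrow> (\<forall>i<k. (\<rho> i, w i, \<rho> (Suc i)) \<in> trans A) \<Longrightarrow>
    \<exists>\<sigma>. \<sigma> 0 \<in> init A \<and> (\<forall>i<k. (\<sigma> i, w i, \<sigma> (Suc i)) \<in> trans (prune A (prune_rel A (bw_di_incl A) (strict_di_sim A))))
      \<and> di_sim A (\<rho> k) (\<sigma> k) \<and> (\<forall>j\<le>k. \<rho> j \<in> acc A \<longrightarrow> \<sigma> j \<in> acc A)"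
proof (induction k arbitrary: \<rho>)
  case 0 then show ?case by (intro exI[of _ \<rho>]) (auto simp: di_refl)
next
  case (Suc k)
  let ?T' = "trans (prune A (prune_rel A (bw_di_incl A) (strict_di_sim A)))"
  define a where "a = w k"
  define r where "r = \<rho> (Suc k)"
  have tk: "(\<rho> k, a, r) \<in> trans A" using Suc.prems unfolding a_def r_def by auto
  have ina: "a \<in> alph A" and rS: "r \<in> states A" using trans_states[OF wf tk] by auto
  define good where "good \<tau> \<longleftrightarrow> \<tau> 0 \<in> init A \<and> (\<forall>i<k. (\<tau> i, w i, \<tau> (Suc i)) \<in> trans A) \<and> (\<forall>j\<le>k. \<rho> j \<in> acc A \<longrightarrow> \<tau> j \<in> acc A)" for \<tau>
  define D where "D = {(y, z). (y, a, z) \<in> trans A \<and> di_sim A r z \<and> (\<exists>\<tau>. good \<tau> \<and> \<tau> k = y)}"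
  have Dsub: "D \<subseteq> states A \<times> states A" unfolding D_def using trans_states[OF wf] by auto
  have finD: "finite D" using wf Dsub finite_subset unfolding well_formed_nba_def by blast
  have inD: "(\<rho> k, r) \<in> D" unfolding D_def good_def using tk Suc.prems by (auto simp: di_refl intro!: exI[of _ \<rho>])
  define f where "f z = card {x \<in> states A. di_sim A x z}" for z
  obtain y z where yzD: "(y,z) \<in> D" and ymax: "\<forall>(y',z')\<in>D. f z' \<le> f z"
  proof -
    have "Max ((f \<circ> snd) ` D) \<in> (f \<circ> snd) ` D" using finD inD by (intro Max_in) auto
    then obtain d where d: "d \<in> D" "Max ((f \<circ> snd) ` D) = (f \<circ> snd) d" by (rule imageE)
    obtain y z where dyz: "d = (y, z)" by (cases d)
    have yz: "(y,z) \<in> D" "Max ((f \<circ> snd) ` D) = f z" using d unfolding dyz by simp_all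
    have "\<forall>(y',z')\<in>D. f z' \<le> f z"
    proof (clarify)
      fix y' z' assume "(y',z') \<in> D"
      hence "(f\<circ>snd) (y',z') \<in> (f\<circ>snd) ` D" by (rule imageI)
      hence "(f\<circ>snd) (y',z') \<le> Max ((f \<circ> snd) ` D)" by (rule Max_ge[OF finite_imageI[OF finD]])
      then show "f z' \<le> f z" using yz(2) by simp
    qed
    then show ?thesis by (rule that[OF yz(1)])
  qed
  from yzD obtain \<tau> where yz: "(y, a, z) \<in> trans A" "di_sim A r z" "good \<tau>" "\<tau> k = y" unfolding D_def by auto
  from Suc.IH[of \<tau>] yz(3) obtain \<sigma>' where \<sigma>': "\<sigma>' 0 \<in> init A" "\<forall>i<k. (\<sigma>' i, w i, \<sigma>' (Suc i)) \<in> ?T'"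
     "di_sim A (\<tau> k) (\<sigma>' k)" "\<forall>j\<le>k. \<tau> j \<in> acc A \<longrightarrow> \<sigma>' j \<in> acc A"
    unfolding good_def by blast
  have zS: "z \<in> states A" using trans_states[OF wf yz(1)] by auto
  obtain ps \<sigma>s where pz: "ps 0 = z" "path A ps \<sigma>s" using inf_path[OF wf fc zS ina] by blast
  obtain z' where z': "(\<sigma>' k, a, z') \<in> trans A" "di_sim A z z'"
    using di_step[OF \<sigma>'(3)[unfolded yz(4)] yz(1) pz] by blast
  have rz': "di_sim A r z'" using di_trans[OF yz(2) z'(2)] .
  have \<sigma>'A: "\<forall>i<k. (\<sigma>' i, w i, \<sigma>' (Suc i)) \<in> trans A" using \<sigma>'(2) by (simp add: prune_trans)
  have notpr: "(\<sigma>' k, a, z') \<in> ?T'"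
  proof (rule ccontr)
    assume "(\<sigma>' k, a, z') \<notin> ?T'"
    then obtain y'' z'' where h: "(y'', a, z'') \<in> trans A" "bw_di_incl A (\<sigma>' k) y''" "strict_di_sim A z' z''"
      using z'(1) unfolding prune_trans by blast
    from h(2)[unfolded bw_di_incl_def, THEN spec[of _ k], THEN spec[of _ w], THEN spec[of _ \<sigma>']] \<sigma>'(1) \<sigma>'A
    obtain qs where qs: "qs 0 \<in> init A" "\<forall>i<k. (qs i, w i, qs (Suc i)) \<in> trans A" "qs k = y''"
       "\<forall>i\<le>k. \<sigma>' i \<in> acc A \<longrightarrow> qs i \<in> acc A" by blast
    have "good qs" unfolding good_def
    proof (intro conjI allI impI)
      fix j assume "j \<le> k" "\<rho> j \<in> acc A"
      then show "qs j \<in> acc A" using qs(4) \<sigma>'(4) yz(3) unfolding good_def by blast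
    qed (use qs in blast)+
    have s3: "di_sim A z' z''" "\<not> di_sim A z'' z'" using h(3) unfolding strict_di_sim_def by auto
    have zz'': "di_sim A z z''" using di_trans[OF z'(2) s3(1)] .
    have "di_sim A r z''" using di_trans[OF rz' s3(1)] .
    hence "(y'', z'') \<in> D" unfolding D_def using h(1) \<open>good qs\<close> qs(3) \<open>di_sim A r z''\<close> by blast
    hence le: "f z'' \<le> f z" using ymax by blast
    have z''S: "z'' \<in> states A" using trans_states[OF wf h(1)] by auto
    have sub1: "{x \<in> states A. di_sim A x z} \<subseteq> {x \<in> states A. di_sim A x z''}"
    proof (rule subsetI)
      fix x assume "x \<in> {x \<in> states A. di_sim A x z}"
      then show "x \<in> {x \<in> states A. di_sim A x z''}" using di_trans[OF _ zz'', of x] by simp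
    qed
    have nz: "\<not> di_sim A z'' z"
    proof
      assume "di_sim A z'' z"
      from di_trans[OF this z'(2)] s3(2) show False by simp
    qed
    have "z'' \<in> {x \<in> states A. di_sim A x z''}" using z''S di_refl[of A z''] by simp
    moreover have "z'' \<notin> {x \<in> states A. di_sim A x z}" using nz by simp
    ultimately have sub: "{x \<in> states A. di_sim A x z} \<subset> {x \<in> states A. di_sim A x z''}" using sub1 by blast
    have finS: "finite (states A)" using wf unfolding well_formed_nba_def by simp
    have "finite {x \<in> states A. di_sim A x z''}" using finS by simp
    from psubset_card_mono[OF this sub] have "f z < f z''" unfolding f_def .
    with le show False by simp
  qed
  define \<sigma> where "\<sigma> = \<sigma>'(Suc k := z')"
  have \<sigma>low: "\<sigma> j = \<sigma>' j" if "j \<le> k" for j using that by (simp add: \<sigma>_def)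
  have \<sigma>k: "\<sigma> (Suc k) = z'" by (simp add: \<sigma>_def)
  show ?case
  proof (intro exI[of _ \<sigma>] conjI allI impI)
    show "\<sigma> 0 \<in> init A" using \<sigma>'(1) \<sigma>low[of 0] by simp
  next
    fix i assume i: "i < Suc k"
    show "(\<sigma> i, w i, \<sigma> (Suc i)) \<in> ?T'"
    proof (cases "i = k")
      case True then show ?thesis using notpr \<sigma>low[of k] \<sigma>k by (simp add: a_def)
    next
      case False then have "i < k" using i by simp
      then show ?thesis using \<sigma>'(2) \<sigma>low[of i] \<sigma>low[of "Suc i"] by simp
    qed
  next
    show "di_sim A (\<rho> (Suc k)) (\<sigma> (Suc k))" using rz' \<sigma>k r_def by simp
  next
    fix j assume j: "j \<le> Suc k" "\<rho> j \<in> acc A"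
    show "\<sigma> j \<in> acc A"
    proof (cases "j = Suc k")
      case True
      obtain ps \<sigma>s where p: "ps 0 = r" "path A ps \<sigma>s" using inf_path[OF wf fc rS ina] by blast
      have "r \<in> acc A" using j True r_def by simp
      from di_acc[OF rz' p this] show ?thesis using True \<sigma>k by simp
    next
      case False then have "j \<le> k" using j by simp
      then show ?thesis using j(2) \<sigma>'(4) yz(3) \<sigma>low[of j] unfolding good_def by simp
    qed
  qed
qed

theorem theorem5p4:
  fixes A :: "('s, 'q) nba"
  assumes "well_formed_nba A" and "forward_complete A" and "backward_complete A"
  shows "lang (prune A (prune_rel A (bw_di_incl A) (strict_di_sim A))) = lang A"
proof
  let ?A' = "prune A (prune_rel A (bw_di_incl A) (strict_di_sim A))"
  have sub: "trans ?A' \<subseteq> trans A" unfolding prune_def by auto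
  show "lang ?A' \<subseteq> lang A" unfolding lang_def using sub by auto
  show "lang A \<subseteq> lang ?A'"
  proof
    fix w assume "w \<in> lang A"
    then obtain \<pi> where \<pi>: "\<pi> 0 \<in> init A" "\<forall>i. (\<pi> i, w i, \<pi> (Suc i)) \<in> trans A" "\<exists>\<^sub>\<infinity>i. \<pi> i \<in> acc A"
      unfolding lang_def by auto
    define G where "G n \<sigma> \<longleftrightarrow> \<sigma> 0 \<in> init A \<and> (\<forall>i<n. (\<sigma> i, w i, \<sigma> (Suc i)) \<in> trans ?A')
       \<and> (\<forall>j\<le>n. \<pi> j \<in> acc A \<longrightarrow> \<sigma> j \<in> acc A)" for n \<sigma>
    have "\<exists>\<sigma>. \<forall>n. G n \<sigma>"
    proof (rule konig[of "states A"])
      show "finite (states A)" using assms(1) unfolding well_formed_nba_def by auto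
      show "\<exists>\<sigma>. G n \<sigma>" for n
      proof -
        have "\<forall>i<n. (\<pi> i, w i, \<pi> (Suc i)) \<in> trans A" using \<pi>(2) by simp
        from key[OF assms(1,2) \<pi>(1) this] obtain \<sigma> where
          "\<sigma> 0 \<in> init A" "\<forall>i<n. (\<sigma> i, w i, \<sigma> (Suc i)) \<in> trans ?A'" "\<forall>j\<le>n. \<pi> j \<in> acc A \<longrightarrow> \<sigma> j \<in> acc A"
          by blast
        then show ?thesis unfolding G_def by blast
      qed
      show "\<sigma> i \<in> states A" if "G n \<sigma>" "i \<le> n" for n \<sigma> i
      proof (cases i)
        case 0 then show ?thesis using that assms(1) unfolding G_def well_formed_nba_def by auto
      next
        case (Suc i')
        then have "(\<sigma> i', w i', \<sigma> i) \<in> trans A" using that sub unfolding G_def by auto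
        then show ?thesis using trans_states[OF assms(1)] by blast
      qed
      show "G m \<sigma>" if "G n \<sigma>" "m \<le> n" for n m \<sigma> using that unfolding G_def by auto
      show "G n \<sigma>'" if "G n \<sigma>" "\<forall>j\<le>n. \<sigma>' j = \<sigma> j" for n \<sigma> \<sigma>'
        using that unfolding G_def by (auto simp: Suc_le_eq)
    qed
    then obtain \<sigma> where "\<forall>n. G n \<sigma>" by blast
    then have "\<sigma> 0 \<in> init A" "\<forall>i. (\<sigma> i, w i, \<sigma> (Suc i)) \<in> trans ?A'" "\<forall>j. \<pi> j \<in> acc A \<longrightarrow> \<sigma> j \<in> acc A"
      unfolding G_def by (blast, meson lessI, blast)
    moreover have "\<exists>\<^sub>\<infinity>i. \<sigma> i \<in> acc A" using \<pi>(3) by (rule frequently_elim1) (use calculation(3) in blast)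
    ultimately show "w \<in> lang ?A'" unfolding lang_def by auto
  qed
qed

end
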